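(* Let $S$ be a minimal $A_\infty$ algebra over $\mathbb F_2$ supported in non-negative degrees. Let $P=(\bigoplus_{i=0}^{D}V_i[i]\otimes S,\ \delta_{i,j})$ be a twisted complex of free right $S$-modules, where each $V_i$ is an $\mathbb F_2$-vector space and the components $\delta_{i,j}$ (from the $i$-th to the $j$-th term) vanish whenever $j\le i$. If the cohomology of the endomorphism complex of $P$ is supported in non-negative degrees, then $P$ is isomorphic, up to shift, to $V\otimes S$ for some vector space $V$ (i.e. only one $V_i$ is non-zero).
   Context: An $A_\infty$ algebra is minimal if $\mu^1=0$. Since the $i$-th term $V_i[i]\otimes S$ is shifted by $i$, each component $\delta_{i,j}$ is a degree-one morphism and corresponds to an element of $\operatorname{Hom}(V_i,V_j\otimes S^{\,1+j-i})$; the twisted complex condition is $\sum \mu^d(\delta,\dots,\delta)=0$. The endomorphism complex of $P$ is $\bigoplus_{i,j}\operatorname{Hom}(V_i,V_j\otimes S^{k+j-i})$ in degree $k$, with differential $x\mapsto\sum_d\mu^d(\delta,\dots,\delta,x,\delta,\dots,\delta)$. *)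

theory Defs
  imports Main
begin

text \<open>
  An F2-vector space is an abelian group in which x + x = 0
  (scalars 0,1 act trivially).  A graded F2-vector space S is a family of
  subgroups Sd k (k :: int) of an ambient abelian group 's whose sum is direct.
  An A-infinity operation is modelled by mu :: 's list => 's, where
  mu [a1,...,ad] = mu^d(a1,...,ad); over F2 no signs occur.
\<close>

definition graded_F2 :: "(int \<Rightarrow> 's::ab_group_add set) \<Rightarrow> bool" where
  "graded_F2 Sd \<longleftrightarrow>
     (\<forall>x::'s. x + x = 0) \<and>
     (\<forall>k. 0 \<in> Sd k \<and> (\<forall>x\<in>Sd k. \<forall>y\<in>Sd k. x + y \<in> Sd k)) \<and>
     (\<forall>K f. finite K \<longrightarrow> (\<forall>k\<in>K. f k \<in> Sd k) \<longrightarrow> sum f K = 0 \<longrightarrow> (\<forall>k\<in>K. f k = 0))"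

definition homog_list :: "(int \<Rightarrow> 's set) \<Rightarrow> 's list \<Rightarrow> (nat \<Rightarrow> int) \<Rightarrow> bool" where
  "homog_list Sd xs ks \<longleftrightarrow> (\<forall>i<length xs. xs ! i \<in> Sd (ks i))"

definition ainf_F2 :: "(int \<Rightarrow> 's::ab_group_add set) \<Rightarrow> ('s list \<Rightarrow> 's) \<Rightarrow> bool" where
  "ainf_F2 Sd mu \<longleftrightarrow>
     graded_F2 Sd \<and>
     (\<forall>xs i a b. i < length xs \<longrightarrow>
        mu (xs[i := a + b]) = mu (xs[i := a]) + mu (xs[i := b])) \<and>
     (\<forall>xs ks. xs \<noteq> [] \<longrightarrow> homog_list Sd xs ks \<longrightarrow>
        mu xs \<in> Sd ((\<Sum>i<length xs. ks i) + 2 - int (length xs))) \<and>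
     (\<forall>xs ks. xs \<noteq> [] \<longrightarrow> homog_list Sd xs ks \<longrightarrow>
        (\<Sum>(r, s)\<in>{(r, s). 1 \<le> s \<and> r + s \<le> length xs}.
           mu (take r xs @ [mu (take s (drop r xs))] @ drop (r + s) xs)) = 0)"

definition minimal_ainf :: "(int \<Rightarrow> 's::ab_group_add set) \<Rightarrow> ('s list \<Rightarrow> 's) \<Rightarrow> bool" where
  "minimal_ainf Sd mu \<longleftrightarrow> ainf_F2 Sd mu \<and> (\<forall>k. \<forall>x\<in>Sd k. mu [x] = 0)"

text \<open>Cohomological unit (for a minimal algebra: a two-sided unit for mu^2 in degree 0).\<close>
definition c_unit :: "(int \<Rightarrow> 's::ab_group_add set) \<Rightarrow> ('s list \<Rightarrow> 's) \<Rightarrow> 's \<Rightarrow> bool" where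
  "c_unit Sd mu u \<longleftrightarrow> u \<in> Sd 0 \<and> (\<forall>k. \<forall>x\<in>Sd k. mu [u, x] = x \<and> mu [x, u] = x)"

text \<open>
  The basis of V_0 (+) ... (+) V_D is a set E,
  lvl e = i means that the basis vector e lies in V_i.  A matrix X :: 'b => 'b => 's
  represents the map sending the basis vector e to sum_f f (x) X e f, so it must be
  column-finite.  mu is extended to matrices by summing over paths.
\<close>
definition mpaths :: "('b \<Rightarrow> 'b \<Rightarrow> 's::zero) list \<Rightarrow> 'b \<Rightarrow> 'b \<Rightarrow> 'b list set" where
  "mpaths Xs e f = {ps. length ps = Suc (length Xs) \<and> ps ! 0 = e \<and> ps ! length Xs = f \<and>
                        (\<forall>i<length Xs. (Xs ! i) (ps ! i) (ps ! Suc i) \<noteq> 0)}"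

definition muM :: "('s::ab_group_add list \<Rightarrow> 's) \<Rightarrow> ('b \<Rightarrow> 'b \<Rightarrow> 's) list \<Rightarrow> 'b \<Rightarrow> 'b \<Rightarrow> 's" where
  "muM mu Xs e f = (\<Sum>ps\<in>mpaths Xs e f. mu (map (\<lambda>i. (Xs ! i) (ps ! i) (ps ! Suc i)) [0..<length Xs]))"

text \<open>Homogeneous elements of degree k of the endomorphism complex
  bigoplus_{i,j} Hom(V_i, V_j (x) S^{k+j-i}).\<close>
definition endo_elt :: "(int \<Rightarrow> 's::ab_group_add set) \<Rightarrow> 'b set \<Rightarrow> ('b \<Rightarrow> nat) \<Rightarrow> int \<Rightarrow> ('b \<Rightarrow> 'b \<Rightarrow> 's) \<Rightarrow> bool" where
  "endo_elt Sd E lvl k x \<longleftrightarrow>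
     (\<forall>e f. x e f \<noteq> 0 \<longrightarrow> e \<in> E \<and> f \<in> E) \<and>
     (\<forall>e f. x e f \<in> Sd (k + int (lvl f) - int (lvl e))) \<and>
     (\<forall>e. finite {f. x e f \<noteq> 0})"

text \<open>Twisted complex (bigoplus_{i=0}^D V_i[i] (x) S, delta) with delta_{i,j} = 0 for j \<le> i.
  Terms with more than D factors delta vanish, so the sum is finite.\<close>
definition twisted_complex ::
  "(int \<Rightarrow> 's::ab_group_add set) \<Rightarrow> ('s list \<Rightarrow> 's) \<Rightarrow> nat \<Rightarrow> 'b set \<Rightarrow> ('b \<Rightarrow> nat) \<Rightarrow> ('b \<Rightarrow> 'b \<Rightarrow> 's) \<Rightarrow> bool" where
  "twisted_complex Sd mu D E lvl \<delta> \<longleftrightarrow>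
     (\<forall>e\<in>E. lvl e \<le> D) \<and>
     endo_elt Sd E lvl 1 \<delta> \<and>
     (\<forall>e f. \<delta> e f \<noteq> 0 \<longrightarrow> lvl e < lvl f) \<and>
     (\<forall>e f. (\<Sum>d\<in>{1..Suc D}. muM mu (replicate d \<delta>) e f) = 0)"

text \<open>Differential of the endomorphism complex:
  x |-> sum_d mu^d(delta,...,delta,x,delta,...,delta).  Terms with d > 2D+1 vanish.\<close>
definition endo_diff ::
  "('s::ab_group_add list \<Rightarrow> 's) \<Rightarrow> nat \<Rightarrow> ('b \<Rightarrow> 'b \<Rightarrow> 's) \<Rightarrow> ('b \<Rightarrow> 'b \<Rightarrow> 's) \<Rightarrow> ('b \<Rightarrow> 'b \<Rightarrow> 's)" where
  "endo_diff mu D \<delta> x = (\<lambda>e f. \<Sum>d\<in>{1..2 * D + 1}. \<Sum>p<d.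
        muM mu (replicate p \<delta> @ [x] @ replicate (d - 1 - p) \<delta>) e f)"

definition endo_coh_nonneg ::
  "(int \<Rightarrow> 's::ab_group_add set) \<Rightarrow> ('s list \<Rightarrow> 's) \<Rightarrow> nat \<Rightarrow> 'b set \<Rightarrow> ('b \<Rightarrow> nat) \<Rightarrow> ('b \<Rightarrow> 'b \<Rightarrow> 's) \<Rightarrow> bool" where
  "endo_coh_nonneg Sd mu D E lvl \<delta> \<longleftrightarrow>
     (\<forall>k<0. \<forall>x. endo_elt Sd E lvl k x \<and> endo_diff mu D \<delta> x = (\<lambda>_ _. 0) \<longrightarrow>
        (\<exists>y. endo_elt Sd E lvl (k - 1) y \<and> endo_diff mu D \<delta> y = x))"

end

theory Submission
  imports Defs
begin

lemma nth_rxr: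
  "i < p \<Longrightarrow> (replicate p a @ [x] @ replicate q a) ! i = a"
  "(replicate p a @ [x] @ replicate q a) ! p = x"
  "p < i \<Longrightarrow> i < Suc (p + q) \<Longrightarrow> (replicate p a @ [x] @ replicate q a) ! i = a"
  by (auto simp: nth_append)

lemma muM_zero_mat:
  "muM mu (replicate p a @ [(\<lambda>_ _. 0)] @ replicate q a) e f = 0"
proof -
  have "mpaths (replicate p a @ [(\<lambda>_ _. 0)] @ replicate q a) e f = {}"
  proof (rule ccontr)
    assume "mpaths (replicate p a @ [(\<lambda>_ _. 0)] @ replicate q a) e f \<noteq> {}"
    then obtain ps where "ps \<in> mpaths (replicate p a @ [(\<lambda>_ _. 0)] @ replicate q a) e f" by blast
    then have "((replicate p a @ [(\<lambda>_ _. 0)] @ replicate q a) ! p) (ps ! p) (ps ! Suc p) \<noteq> 0"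
      unfolding mpaths_def by auto
    then show False using nth_rxr(2)[of p a "(\<lambda>_ _. 0)" q] by simp
  qed
  then show ?thesis by (simp add: muM_def)
qed

theorem lemmaA4:
  fixes Sd :: "int \<Rightarrow> 's::ab_group_add set" and mu :: "'s list \<Rightarrow> 's" and u :: 's
    and D :: nat and E :: "'b set" and lvl :: "'b \<Rightarrow> nat" and \<delta> :: "'b \<Rightarrow> 'b \<Rightarrow> 's"
  assumes "minimal_ainf Sd mu"
    and "c_unit Sd mu u"
    and "\<forall>k<0. Sd k = {0}"
    and "twisted_complex Sd mu D E lvl \<delta>"
    and "endo_coh_nonneg Sd mu D E lvl \<delta>"
  shows "(\<exists>i. \<forall>e\<in>E. lvl e = i) \<or> (\<forall>k. Sd k = {0})"
proof (rule ccontr)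
  assume C: "\<not> ?thesis"
  have ainf: "ainf_F2 Sd mu" and min1: "\<forall>k. \<forall>x\<in>Sd k. mu [x] = 0"
    using assms(1) by (auto simp: minimal_ainf_def)
  have gr: "graded_F2 Sd" using ainf by (simp add: ainf_F2_def)
  have zero_in: "\<And>k. 0 \<in> Sd k" using gr by (simp add: graded_F2_def)
  have lin: "\<And>xs i a b. i < length xs \<Longrightarrow>
        mu (xs[i := a + b]) = mu (xs[i := a]) + mu (xs[i := b])"
    using ainf by (simp add: ainf_F2_def)
  have uS: "u \<in> Sd 0" and uL: "\<And>k x. x \<in> Sd k \<Longrightarrow> mu [u, x] = x"
    using assms(2) by (auto simp: c_unit_def)
  have u0: "u \<noteq> 0"
  proof
    assume "u = 0"
    have "\<forall>k. Sd k = {0}"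
    proof (intro allI set_eqI iffI)
      fix k x assume "x \<in> Sd k"
      have "mu ([0::'s, x][0 := 0 + 0]) = mu ([0, x][0 := 0]) + mu ([0, x][0 := 0])"
        using lin[of 0 "[0,x]" 0 0] by simp
      hence "mu [0, x] = mu [0, x] + mu [0, x]" by simp
      hence "mu [0, x] = 0" by (metis add_cancel_right_right)
      then show "x \<in> {0}" using uL[OF \<open>x \<in> Sd k\<close>] \<open>u = 0\<close> by simp
    next
      fix k x assume "x \<in> {0::'s}" then show "x \<in> Sd k" using zero_in by simp
    qed
    then show False using C by simp
  qed
  have tc: "\<forall>e\<in>E. lvl e \<le> D" "endo_elt Sd E lvl 1 \<delta>"
    "\<forall>e f. \<delta> e f \<noteq> 0 \<longrightarrow> lvl e < lvl f"
    using assms(4) by (auto simp: twisted_complex_def)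
  have dE: "\<And>a b. \<delta> a b \<noteq> 0 \<Longrightarrow> a \<in> E \<and> b \<in> E"
    using tc(2) by (simp add: endo_elt_def)
  from C obtain e1 e2 where e12: "e1 \<in> E" "e2 \<in> E" "lvl e1 \<noteq> lvl e2"
    by (metis)
  have finL: "finite (lvl ` E)"
    using tc(1) by (meson finite_atMost finite_subset image_subsetI atMost_iff)
  define l where "l = Min (lvl ` E)"
  define m where "m = Max (lvl ` E)"
  have lmin: "\<And>a. a \<in> E \<Longrightarrow> l \<le> lvl a" using finL l_def by simp
  have mmax: "\<And>a. a \<in> E \<Longrightarrow> lvl a \<le> m" using finL m_def by simp
  have "l \<in> lvl ` E" unfolding l_def using finL e12 by (intro Min_in) auto
  then obtain e0 where e0: "e0 \<in> E" "lvl e0 = l" by auto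
  have "m \<in> lvl ` E" unfolding m_def using finL e12 by (intro Max_in) auto
  then obtain f0 where f0: "f0 \<in> E" "lvl f0 = m" by auto
  have lm: "l < m" using lmin[OF e12(1)] mmax[OF e12(1)] lmin[OF e12(2)] mmax[OF e12(2)] e12(3) by linarith
  define k :: int where "k = int l - int m"
  define x :: "'b \<Rightarrow> 'b \<Rightarrow> 's" where "x = (\<lambda>e f. if e = e0 \<and> f = f0 then u else 0)"
  have xelt: "endo_elt Sd E lvl k x"
  proof -
    have 1: "\<forall>e f. x e f \<noteq> 0 \<longrightarrow> e \<in> E \<and> f \<in> E" using e0 f0 by (auto simp: x_def)
    have 2: "\<forall>e f. x e f \<in> Sd (k + int (lvl f) - int (lvl e))"
      using e0 f0 uS zero_in by (auto simp: x_def k_def)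
    have 3: "\<forall>e. finite {f. x e f \<noteq> 0}"
    proof
      fix e have "{f. x e f \<noteq> 0} \<subseteq> {f0}" by (auto simp: x_def split: if_splits)
      then show "finite {f. x e f \<noteq> 0}" by (rule finite_subset) simp
    qed
    show ?thesis using 1 2 3 unfolding endo_elt_def by blast
  qed
  have kneg: "k < 0" using lm k_def by simp
  have closed: "endo_diff mu D \<delta> x = (\<lambda>_ _. 0)"
    unfolding endo_diff_def
  proof (intro ext sum.neutral ballI)
    fix e f d p assume d: "d \<in> {1..2 * D + 1}" and p: "p \<in> {..<d}"
    let ?Xs = "replicate p \<delta> @ [x] @ replicate (d - 1 - p) \<delta>"
    have len: "length ?Xs = d" using d p by auto
    have "\<forall>ps\<in>mpaths ?Xs e f. mu (map (\<lambda>i. (?Xs ! i) (ps ! i) (ps ! Suc i)) [0..<length ?Xs]) = 0"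
    proof
      fix ps assume ps: "ps \<in> mpaths ?Xs e f"
      have nz: "\<And>i. i < d \<Longrightarrow> (?Xs ! i) (ps ! i) (ps ! Suc i) \<noteq> 0"
        using ps len by (auto simp: mpaths_def)
      have xp: "x (ps ! p) (ps ! Suc p) \<noteq> 0" using nz[of p] p nth_rxr(2)[of p \<delta> x "d - 1 - p"] by simp
      hence pe: "ps ! p = e0" "ps ! Suc p = f0" by (auto simp: x_def split: if_splits)
      have np: "\<not> 0 < p"
      proof
        assume "0 < p"
        have "(?Xs ! (p - 1)) (ps ! (p - 1)) (ps ! Suc (p - 1)) \<noteq> 0" using nz[of "p - 1"] p by simp
        moreover have "?Xs ! (p - 1) = \<delta>" using \<open>0 < p\<close> nth_rxr(1)[of "p - 1" p \<delta> x "d - 1 - p"] by simp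
        moreover have "Suc (p - 1) = p" using \<open>0 < p\<close> by simp
        ultimately have "\<delta> (ps ! (p - 1)) e0 \<noteq> 0" using pe by metis
        then have "ps ! (p - 1) \<in> E" "lvl (ps ! (p - 1)) < lvl e0" using tc(3) dE by blast+
        then show False using lmin e0 by fastforce
      qed
      have nq: "\<not> Suc p < d"
      proof
        assume "Suc p < d"
        have "(?Xs ! Suc p) (ps ! Suc p) (ps ! Suc (Suc p)) \<noteq> 0" using nz[of "Suc p"] \<open>Suc p < d\<close> by simp
        moreover have "?Xs ! Suc p = \<delta>" using nth_rxr(3)[of p "Suc p" "d - 1 - p"] \<open>Suc p < d\<close> by simp
        ultimately have "\<delta> f0 (ps ! Suc (Suc p)) \<noteq> 0" using pe by simp
        then have "ps ! Suc (Suc p) \<in> E" "lvl f0 < lvl (ps ! Suc (Suc p))" using tc(3) dE by blast+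
        then show False using mmax f0 by fastforce
      qed
      have "p = 0" "d = 1" using np nq p by auto
      then have "map (\<lambda>i. (?Xs ! i) (ps ! i) (ps ! Suc i)) [0..<length ?Xs] = [x e0 f0]"
        using len pe by simp
      also have "x e0 f0 = u" by (simp add: x_def)
      finally have mp: "map (\<lambda>i. (?Xs ! i) (ps ! i) (ps ! Suc i)) [0..<length ?Xs] = [u]" .
      moreover have "mu [u] = 0" using min1 uS by blast
      ultimately show "mu (map (\<lambda>i. (?Xs ! i) (ps ! i) (ps ! Suc i)) [0..<length ?Xs]) = 0"
        unfolding mp by blast
    qed
    then show "muM mu ?Xs e f = 0" unfolding muM_def by (rule sum.neutral)
  qed
  obtain y where y: "endo_elt Sd E lvl (k - 1) y" "endo_diff mu D \<delta> y = x"
    using assms(5) kneg xelt closed unfolding endo_coh_nonneg_def by blast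
  have y0: "y = (\<lambda>_ _. 0)"
  proof (intro ext)
    fix a b
    show "y a b = 0"
    proof (rule ccontr)
      assume "y a b \<noteq> 0"
      hence ab: "a \<in> E" "b \<in> E" using y(1) by (auto simp: endo_elt_def)
      have "y a b \<in> Sd (k - 1 + int (lvl b) - int (lvl a))" using y(1) by (simp add: endo_elt_def)
      moreover have "k - 1 + int (lvl b) - int (lvl a) < 0"
        using lmin[OF ab(1)] mmax[OF ab(2)] k_def by simp
      ultimately show False using assms(3) \<open>y a b \<noteq> 0\<close> by auto
    qed
  qed
  have "endo_diff mu D \<delta> (\<lambda>_ _. 0) = (\<lambda>_ _. 0)"
    unfolding endo_diff_def by (intro ext sum.neutral ballI) (rule muM_zero_mat)
  then have "x = (\<lambda>_ _. 0)" using y y0 by simp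
  then have "x e0 f0 = 0" by simp
  then show False using u0 by (simp add: x_def)
qed

end
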